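(* Let $(X,\mathcal{M},O)$ be an empirical scenario, let $e=\{e_C\}_{C\in\mathcal{M}}$ be an empirical model on it, and let $e^\dagger$ be any WPS representation of $e$, with underlying weak probability space $(Y,\Sigma,\mu)$. Then: (1) if $e$ is strongly contextual, then $e^\dagger$ maximally violates subadditivity, i.e. there is a finite $V\subseteq\Sigma$ with $\bigcup V\in\Sigma$ and $\mathfrak{a}(V)=1$; (2) if $e$ is logically contextual, then $e^\dagger$ violates subadditivity, i.e. there is a finite $V\subseteq\Sigma$ with $\bigcup V\in\Sigma$ and $\mathfrak{a}(V)>0$; (3) if $e$ is probabilistically contextual, then every monotonic extension $(Y,\Sigma',\mu')$ of $(Y,\Sigma,\mu)$ violates additivity, i.e. there is a finite collection $V\subseteq\Sigma'$ of pairwise disjoint sets with $\bigcup V\in\Sigma'$ and $\mu'(\bigcup V)\neq\sum_{A\in V}\mu'(A)$.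
   Context: An empirical scenario is a triple $(X,\mathcal{M},O)$ where $X$ is a finite set (measurements), $\mathcal{M}$ is a family of subsets of $X$ (maximal contexts) covering $X$, none contained in another, and $O$ is a finite nonempty set (outcomes). A context is a subset of some maximal context; $\mathcal{M}'$ denotes the set of all contexts. For $U\subseteq X$ let $\mathcal{E}(U):=O^U$ (functions $U\to O$, called sections over $U$); for $U\subseteq U'$ and $s\in\mathcal{E}(U')$, $s|_U$ is the restriction; elements of $\mathcal{E}(X)$ are global sections. For $C\in\mathcal{M}$, a probability distribution $e_C$ on the finite set $\mathcal{E}(C)$, and $U\subseteq C$, the marginal $e_C|_U$ is the distribution on $\mathcal{E}(U)$ given by $e_C|_U(s)=\sum_{r\in\mathcal{E}(C),\,r|_U=s}e_C(r)$. An empirical model is a family $e=\{e_C\}_{C\in\mathcal{M}}$ of probability distributions $e_C$ on $\mathcal{E}(C)$ with $e_C|_{C\cap C'}=e_{C'}|_{C\cap C'}$ for all $C,C'\in\mathcal{M}$. A global section $s$ is consistent with the support of $e$ if $e_C(s|_C)>0$ for all $C\in\mathcal{M}$. $e$ is strongly contextual if no global section is consistent with the support of $e$; logically contextual if there exist $C\in\mathcal{M}$ and $t\in\mathcal{E}(C)$ with $e_C(t)>0$ such that no global section $s$ with $s|_C=t$ is consistent with the support of $e$; probabilistically contextual if there is no probability distribution $e_X$ on $\mathcal{E}(X)$ with $e_X|_C=e_C$ for all $C\in\mathcal{M}$. An event representation of $e$ is a set $Y$ together with an injective map $\bar E:\bigcup_{U\subseteq X}\mathcal{E}(U)\to P(Y)$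 such that for every nonempty $U\subseteq X$ and $s\in\mathcal{E}(U)$, $\bar E(s)=\bigcap_{x\in U}\bar E(s|_{\{x\}})\neq\emptyset$. For a nonempty context $U$, let $\Sigma_U$ be the Boolean algebra of subsets of $Y$ generated by $\{\bar E(s):s\in\mathcal{E}(\{x\}),x\in U\}$, and let $\Sigma=\bigcup_{U\in\mathcal{M}'}\Sigma_U$ (a collection of subsets of $Y$, not necessarily an algebra). A WPS representation of $e$ is such an event representation together with a function $\mu:\Sigma\to\mathbb{R}$ satisfying: (WC) for every context $U$, $\mu|_{\Sigma_U}$ is a (finitely additive) probability measure on $(Y,\Sigma_U)$; (EC) for every $C\in\mathcal{M}$, $U\subseteq C$, and $s\in\mathcal{E}(U)$, $\mu(\bar E(s))=e_C|_U(s)$; (ME) for every context $U$ and distinct $s,s'\in\mathcal{E}(U)$, $\mu(\bar E(s)\cap\bar E(s'))=0$. The triple $(Y,\Sigma,\mu)$ is its weak probability space. For a finite $V\subseteq\Sigma$ with $\bigcup V\in\Sigma$, the defect of subadditivity is $\mathfrak{a}(V):=\mu(\bigcup V)-\sum_{A\in V}\mu(A)$. An extension of $(Y,\Sigma,\mu)$ is a triple $(Y,\Sigma',\mu')$ where $\Sigma'\subseteq P(Y)$ contains the algebra generated by $\Sigma$ and $\mu':\Sigma'\to\mathbb{R}$ satisfies $\mu'|_\Sigma=\mu$; it is monotonic if $\mu'$ takes values in $[0,1]$ and $A\subseteq B$ implies $\mu'(A)\le\mu'(B)$. *)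

theory Defs
  imports Complex_Main
begin

definition sections :: "'o set \<Rightarrow> 'x set \<Rightarrow> ('x \<rightharpoonup> 'o) set" where
  "sections Os U = {s. dom s = U \<and> ran s \<subseteq> Os}"

definition empirical_scenario :: "'x set \<Rightarrow> 'x set set \<Rightarrow> 'o set \<Rightarrow> bool" where
  "empirical_scenario X M Os \<longleftrightarrow>
     finite X \<and> (\<forall>C\<in>M. C \<subseteq> X) \<and> \<Union>M = X \<and>
     (\<forall>C\<in>M. \<forall>C'\<in>M. C \<subseteq> C' \<longrightarrow> C = C') \<and>
     finite Os \<and> Os \<noteq> {}"

definition marg :: "'o set \<Rightarrow> 'x set \<Rightarrow> (('x \<rightharpoonup> 'o) \<Rightarrow> real) \<Rightarrow> 'x set \<Rightarrow> ('x \<rightharpoonup> 'o) \<Rightarrow> real" where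
  "marg Os C p U s = (\<Sum>r\<in>{r\<in>sections Os C. r |` U = s}. p r)"

definition prob_dist :: "'a set \<Rightarrow> ('a \<Rightarrow> real) \<Rightarrow> bool" where
  "prob_dist S p \<longleftrightarrow> (\<forall>r\<in>S. 0 \<le> p r) \<and> sum p S = 1"

definition empirical_model ::
  "'x set \<Rightarrow> 'x set set \<Rightarrow> 'o set \<Rightarrow> ('x set \<Rightarrow> ('x \<rightharpoonup> 'o) \<Rightarrow> real) \<Rightarrow> bool" where
  "empirical_model X M Os e \<longleftrightarrow>
     (\<forall>C\<in>M. prob_dist (sections Os C) (e C)) \<and>
     (\<forall>C\<in>M. \<forall>C'\<in>M. \<forall>s\<in>sections Os (C \<inter> C').
        marg Os C (e C) (C \<inter> C') s = marg Os C' (e C') (C \<inter> C') s)"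

definition consistent_support ::
  "'x set set \<Rightarrow> ('x set \<Rightarrow> ('x \<rightharpoonup> 'o) \<Rightarrow> real) \<Rightarrow> ('x \<rightharpoonup> 'o) \<Rightarrow> bool" where
  "consistent_support M e s \<longleftrightarrow> (\<forall>C\<in>M. e C (s |` C) > 0)"

definition strongly_contextual ::
  "'x set \<Rightarrow> 'x set set \<Rightarrow> 'o set \<Rightarrow> ('x set \<Rightarrow> ('x \<rightharpoonup> 'o) \<Rightarrow> real) \<Rightarrow> bool" where
  "strongly_contextual X M Os e \<longleftrightarrow>
     \<not> (\<exists>s\<in>sections Os X. consistent_support M e s)"

definition logically_contextual ::
  "'x set \<Rightarrow> 'x set set \<Rightarrow> 'o set \<Rightarrow> ('x set \<Rightarrow> ('x \<rightharpoonup> 'o) \<Rightarrow> real) \<Rightarrow> bool" where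
  "logically_contextual X M Os e \<longleftrightarrow>
     (\<exists>C\<in>M. \<exists>t\<in>sections Os C. e C t > 0 \<and>
        \<not> (\<exists>s\<in>sections Os X. s |` C = t \<and> consistent_support M e s))"

definition probabilistically_contextual ::
  "'x set \<Rightarrow> 'x set set \<Rightarrow> 'o set \<Rightarrow> ('x set \<Rightarrow> ('x \<rightharpoonup> 'o) \<Rightarrow> real) \<Rightarrow> bool" where
  "probabilistically_contextual X M Os e \<longleftrightarrow>
     \<not> (\<exists>eX. prob_dist (sections Os X) eX \<and>
            (\<forall>C\<in>M. \<forall>t\<in>sections Os C. marg Os X eX C t = e C t))"

definition contexts :: "'x set set \<Rightarrow> 'x set set" where
  "contexts M = {U. \<exists>C\<in>M. U \<subseteq> C}"

inductive_set gen_alg :: "'y set \<Rightarrow> 'y set set \<Rightarrow> 'y set set" for Y G where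
  gen: "A \<in> G \<Longrightarrow> A \<in> gen_alg Y G"
| top: "Y \<in> gen_alg Y G"
| compl: "A \<in> gen_alg Y G \<Longrightarrow> Y - A \<in> gen_alg Y G"
| union: "A \<in> gen_alg Y G \<Longrightarrow> B \<in> gen_alg Y G \<Longrightarrow> A \<union> B \<in> gen_alg Y G"

definition event_rep ::
  "'x set \<Rightarrow> 'o set \<Rightarrow> 'y set \<Rightarrow> (('x \<rightharpoonup> 'o) \<Rightarrow> 'y set) \<Rightarrow> bool" where
  "event_rep X Os Y Eb \<longleftrightarrow>
     (\<forall>U\<in>Pow X. \<forall>s\<in>sections Os U. Eb s \<subseteq> Y) \<and>
     inj_on Eb (\<Union>U\<in>Pow X. sections Os U) \<and>
     (\<forall>U\<in>Pow X. U \<noteq> {} \<longrightarrow> (\<forall>s\<in>sections Os U.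
        Eb s = (\<Inter>x\<in>U. Eb (s |` {x})) \<and> Eb s \<noteq> {}))"

definition SigU :: "'o set \<Rightarrow> 'y set \<Rightarrow> (('x \<rightharpoonup> 'o) \<Rightarrow> 'y set) \<Rightarrow> 'x set \<Rightarrow> 'y set set" where
  "SigU Os Y Eb U = gen_alg Y {Eb s | s x. x \<in> U \<and> s \<in> sections Os {x}}"

definition Sig :: "'x set set \<Rightarrow> 'o set \<Rightarrow> 'y set \<Rightarrow> (('x \<rightharpoonup> 'o) \<Rightarrow> 'y set) \<Rightarrow> 'y set set" where
  "Sig M Os Y Eb = (\<Union>U\<in>{U\<in>contexts M. U \<noteq> {}}. SigU Os Y Eb U)"

definition fa_prob :: "'y set \<Rightarrow> 'y set set \<Rightarrow> ('y set \<Rightarrow> real) \<Rightarrow> bool" where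
  "fa_prob Y A \<mu> \<longleftrightarrow> \<mu> Y = 1 \<and> (\<forall>a\<in>A. 0 \<le> \<mu> a) \<and>
     (\<forall>a\<in>A. \<forall>b\<in>A. a \<inter> b = {} \<longrightarrow> \<mu> (a \<union> b) = \<mu> a + \<mu> b)"

definition wps_rep ::
  "'x set \<Rightarrow> 'x set set \<Rightarrow> 'o set \<Rightarrow> ('x set \<Rightarrow> ('x \<rightharpoonup> 'o) \<Rightarrow> real)
   \<Rightarrow> 'y set \<Rightarrow> (('x \<rightharpoonup> 'o) \<Rightarrow> 'y set) \<Rightarrow> ('y set \<Rightarrow> real) \<Rightarrow> bool" where
  "wps_rep X M Os e Y Eb \<mu> \<longleftrightarrow>
     event_rep X Os Y Eb \<and>
     (\<forall>U\<in>contexts M. U \<noteq> {} \<longrightarrow> fa_prob Y (SigU Os Y Eb U) \<mu>) \<and>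
     (\<forall>C\<in>M. \<forall>U. U \<subseteq> C \<longrightarrow> U \<noteq> {} \<longrightarrow>
        (\<forall>s\<in>sections Os U. \<mu> (Eb s) = marg Os C (e C) U s)) \<and>
     (\<forall>U\<in>contexts M. \<forall>s\<in>sections Os U. \<forall>s'\<in>sections Os U.
        s \<noteq> s' \<longrightarrow> \<mu> (Eb s \<inter> Eb s') = 0)"

definition defect :: "('y set \<Rightarrow> real) \<Rightarrow> 'y set set \<Rightarrow> real" where
  "defect \<mu> V = \<mu> (\<Union>V) - (\<Sum>A\<in>V. \<mu> A)"

definition monotonic_extension ::
  "'y set \<Rightarrow> 'y set set \<Rightarrow> ('y set \<Rightarrow> real) \<Rightarrow> 'y set set \<Rightarrow> ('y set \<Rightarrow> real) \<Rightarrow> bool" where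
  "monotonic_extension Y \<Sigma> \<mu> \<Sigma>' \<mu>' \<longleftrightarrow>
     \<Sigma>' \<subseteq> Pow Y \<and> gen_alg Y \<Sigma> \<subseteq> \<Sigma>' \<and> (\<forall>A\<in>\<Sigma>. \<mu>' A = \<mu> A) \<and>
     (\<forall>A\<in>\<Sigma>'. 0 \<le> \<mu>' A \<and> \<mu>' A \<le> 1) \<and>
     (\<forall>A\<in>\<Sigma>'. \<forall>B\<in>\<Sigma>'. A \<subseteq> B \<longrightarrow> \<mu>' A \<le> \<mu>' B)"

end

theory Submission
  imports Defs
begin


definition is_alg :: "'y set \<Rightarrow> 'y set set \<Rightarrow> bool" where
  "is_alg Y A \<longleftrightarrow> A \<subseteq> Pow Y \<and> Y \<in> A \<and> (\<forall>a\<in>A. Y - a \<in> A) \<and> (\<forall>a\<in>A. \<forall>b\<in>A. a \<union> b \<in> A)"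

lemma gen_alg_sub: "G \<subseteq> Pow Y \<Longrightarrow> gen_alg Y G \<subseteq> Pow Y"
proof
  fix A assume h: "G \<subseteq> Pow Y" and "A \<in> gen_alg Y G"
  from this(2) show "A \<in> Pow Y" using h by (induction rule: gen_alg.induct) auto
qed

lemma gen_alg_is_alg: "G \<subseteq> Pow Y \<Longrightarrow> is_alg Y (gen_alg Y G)"
  unfolding is_alg_def using gen_alg_sub by (blast intro: gen_alg.intros)

lemma alg_empty: "is_alg Y A \<Longrightarrow> {} \<in> A"
  unfolding is_alg_def by (metis Diff_cancel)

lemma alg_inter: "is_alg Y A \<Longrightarrow> a \<in> A \<Longrightarrow> b \<in> A \<Longrightarrow> a \<inter> b \<in> A"
proof -
  assume h: "is_alg Y A" "a \<in> A" "b \<in> A"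
  then have "a \<subseteq> Y" "b \<subseteq> Y" unfolding is_alg_def by auto
  then have "a \<inter> b = Y - ((Y - a) \<union> (Y - b))" by auto
  then show ?thesis using h unfolding is_alg_def by metis
qed

lemma alg_diff: "is_alg Y A \<Longrightarrow> a \<in> A \<Longrightarrow> b \<in> A \<Longrightarrow> a - b \<in> A"
proof -
  assume h: "is_alg Y A" "a \<in> A" "b \<in> A"
  then have "a \<subseteq> Y" unfolding is_alg_def by auto
  then have "a - b = a \<inter> (Y - b)" by auto
  then show ?thesis using h alg_inter unfolding is_alg_def by metis
qed

lemma alg_Union: assumes "is_alg Y A" "finite F" "F \<subseteq> A" shows "\<Union>F \<in> A"
  using assms(2,3) proof (induction F rule: finite_induct)
  case empty then show ?case using alg_empty assms(1) by simp
next
  case (insert a F) then show ?case using assms(1) unfolding is_alg_def by simp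
qed

lemma alg_Inter: assumes "is_alg Y A" "finite F" "F \<noteq> {}" "F \<subseteq> A" shows "\<Inter>F \<in> A"
  using assms(2,3,4) proof (induction F rule: finite_ne_induct)
  case (singleton x) then show ?case by simp
next
  case (insert a F)
  then have "a \<in> A" "\<Inter>F \<in> A" by auto
  then show ?case using alg_inter[OF assms(1)] by simp
qed

locale fam = fixes Y A m assumes alg: "is_alg Y A" and fa: "fa_prob Y A m"
begin

lemma nonneg: "a \<in> A \<Longrightarrow> 0 \<le> m a" using fa unfolding fa_prob_def by auto
lemma add: "a \<in> A \<Longrightarrow> b \<in> A \<Longrightarrow> a \<inter> b = {} \<Longrightarrow> m (a \<union> b) = m a + m b"
  using fa unfolding fa_prob_def by auto
lemma top: "m Y = 1" using fa unfolding fa_prob_def by auto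

lemma m_empty: "m {} = 0"
  using add[of "{}" "{}"] alg_empty[OF alg] by simp

lemma split: "a \<in> A \<Longrightarrow> b \<in> A \<Longrightarrow> m b = m (b \<inter> a) + m (b - a)"
proof -
  assume h: "a \<in> A" "b \<in> A"
  have "b = (b \<inter> a) \<union> (b - a)" by auto
  then show ?thesis using add[of "b \<inter> a" "b - a"] alg_inter[OF alg] alg_diff[OF alg] h by auto
qed

lemma un: "a \<in> A \<Longrightarrow> b \<in> A \<Longrightarrow> m (a \<union> b) = m a + m b - m (a \<inter> b)"
proof -
  assume h: "a \<in> A" "b \<in> A"
  have "a \<union> b = a \<union> (b - a)" by auto
  then have "m (a \<union> b) = m a + m (b - a)" using add[of a "b - a"] alg_diff[OF alg] h by auto
  then show ?thesis using split[OF h(1) h(2)] by (simp add: Int_commute)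
qed

lemma compl: "a \<in> A \<Longrightarrow> m (Y - a) = 1 - m a"
proof -
  assume h: "a \<in> A"
  have "a \<subseteq> Y" using alg h unfolding is_alg_def by auto
  then have "Y = a \<union> (Y - a)" by auto
  then have "m Y = m a + m (Y - a)" using add[of a "Y - a"] alg h unfolding is_alg_def by auto
  then show ?thesis using top by simp
qed

lemma mono: "a \<in> A \<Longrightarrow> b \<in> A \<Longrightarrow> a \<subseteq> b \<Longrightarrow> m a \<le> m b"
proof -
  assume h: "a \<in> A" "b \<in> A" "a \<subseteq> b"
  then have "b \<inter> a = a" by auto
  then have "m b = m a + m (b - a)" using split[of a b] h by simp
  then show ?thesis using nonneg alg_diff[OF alg h(2) h(1)] by simp
qed

lemma subadd: "finite F \<Longrightarrow> F \<subseteq> A \<Longrightarrow> m (\<Union>F) \<le> (\<Sum>a\<in>F. m a)"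
proof (induction F rule: finite_induct)
  case empty then show ?case using m_empty by simp
next
  case (insert a F)
  then have "\<Union>F \<in> A" using alg_Union[OF alg] by auto
  have "a \<in> A" using insert by simp
  have "0 \<le> m (a \<inter> \<Union>F)" using nonneg alg_inter[OF alg \<open>a \<in> A\<close> \<open>\<Union>F \<in> A\<close>] by simp
  then have "m (a \<union> \<Union>F) \<le> m a + m (\<Union>F)"
    using un[OF \<open>a \<in> A\<close> \<open>\<Union>F \<in> A\<close>] by simp
  then show ?case using insert by simp
qed

lemma null_overlap:
  assumes "finite F" "F \<subseteq> A" "\<forall>a\<in>F. \<forall>b\<in>F. a \<noteq> b \<longrightarrow> m (a \<inter> b) = 0"
  shows "m (\<Union>F) = (\<Sum>a\<in>F. m a)"
  using assms proof (induction F rule: finite_induct)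
  case empty then show ?case using m_empty by simp
next
  case (insert a F)
  have aA: "a \<in> A" and FA: "F \<subseteq> A" using insert.prems by auto
  have U: "\<Union>F \<in> A" using alg_Union[OF alg insert.hyps(1) FA] .
  have IH: "m (\<Union>F) = (\<Sum>a\<in>F. m a)" using insert.IH FA insert.prems(2) by blast
  have fin: "finite ((\<lambda>b. a \<inter> b) ` F)" using insert.hyps(1) by simp
  have sub: "(\<lambda>b. a \<inter> b) ` F \<subseteq> A" using FA aA alg_inter[OF alg] by blast
  have z: "\<And>b. b \<in> F \<Longrightarrow> m (a \<inter> b) = 0"
  proof -
    fix b assume b: "b \<in> F"
    then have "a \<noteq> b" using insert.hyps(2) by blast
    then show "m (a \<inter> b) = 0" using insert.prems(2) b by blast
  qed
  have eq: "a \<inter> \<Union>F = \<Union>((\<lambda>b. a \<inter> b) ` F)" by blast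
  have "m (a \<inter> \<Union>F) \<le> (\<Sum>c\<in>(\<lambda>b. a \<inter> b) ` F. m c)" unfolding eq using subadd[OF fin sub] .
  also have "\<dots> = 0"
    by (rule sum.neutral) (use z in blast)
  finally have "m (a \<inter> \<Union>F) \<le> 0" .
  moreover have "0 \<le> m (a \<inter> \<Union>F)" using nonneg alg_inter[OF alg aA U] by simp
  ultimately have "m (a \<inter> \<Union>F) = 0" by simp
  then have "m (a \<union> \<Union>F) = m a + m (\<Union>F)" using un[OF aA U] by simp
  then show ?case using insert.hyps IH by simp
qed

end

lemma fin_sec: "finite Os \<Longrightarrow> finite U \<Longrightarrow> finite (sections Os U)"
  unfolding sections_def by (rule finite_set_of_finite_maps)

lemma restr_sec: "t \<in> sections Os U \<Longrightarrow> V \<subseteq> U \<Longrightarrow> t |` V \<in> sections Os V"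
  unfolding sections_def ran_def by (auto simp: restrict_map_def split: if_splits)

lemma restr_restr: "x \<in> C \<Longrightarrow> (s |` C) |` {x} = s |` {x}"
  by (auto simp: restrict_map_def)

lemma restr_self: "t \<in> sections Os U \<Longrightarrow> t |` U = t"
  unfolding sections_def by (rule ext) (auto simp: restrict_map_def)

lemma sec_eq:
  assumes "t \<in> sections Os U" "t' \<in> sections Os U" "\<forall>x\<in>U. t |` {x} = t' |` {x}"
  shows "t = t'"
proof (rule ext)
  fix x show "t x = t' x"
  proof (cases "x \<in> U")
    case True
    then have "(t |` {x}) x = (t' |` {x}) x" using assms(3) by simp
    then show ?thesis by simp
  next
    case False
    then have "x \<notin> dom t" "x \<notin> dom t'" using assms(1,2) unfolding sections_def by auto
    then show ?thesis by (simp add: domIff)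
  qed
qed

lemma sec_empty: "sections Os {} = {Map.empty}"
  unfolding sections_def by auto

lemma marg_self: "t \<in> sections Os C \<Longrightarrow> marg Os C p C t = p t"
proof -
  assume t: "t \<in> sections Os C"
  have "{r\<in>sections Os C. r |` C = t} = {t}" using t restr_self by fastforce
  then show ?thesis unfolding marg_def by simp
qed

lemma sum_marg:
  assumes "finite Os" "finite C" "U \<subseteq> C"
  shows "(\<Sum>r\<in>sections Os U. marg Os C p U r) = (\<Sum>q\<in>sections Os C. p q)"
  unfolding marg_def
proof (rule sum.group)
  show "finite (sections Os C)" using assms fin_sec by blast
  show "finite (sections Os U)" using assms fin_sec finite_subset by blast
  show "(\<lambda>r. r |` U) ` sections Os C \<subseteq> sections Os U" using assms(3) restr_sec by blast
qed



locale sc =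
  fixes X :: "'x set" and M :: "'x set set" and Os :: "'o set"
    and e :: "'x set \<Rightarrow> ('x \<rightharpoonup> 'o) \<Rightarrow> real"
    and Y :: "'y set" and Eb :: "('x \<rightharpoonup> 'o) \<Rightarrow> 'y set" and \<mu> :: "'y set \<Rightarrow> real"
  assumes scen: "empirical_scenario X M Os"
    and model: "empirical_model X M Os e"
    and wps: "wps_rep X M Os e Y Eb \<mu>"
begin

lemma finX: "finite X" and finOs: "finite Os" and MX: "\<And>C. C \<in> M \<Longrightarrow> C \<subseteq> X"
  and UM: "\<Union>M = X" and anti: "\<And>C C'. C \<in> M \<Longrightarrow> C' \<in> M \<Longrightarrow> C \<subseteq> C' \<Longrightarrow> C = C'"
  using scen unfolding empirical_scenario_def by auto

lemma pd: "C \<in> M \<Longrightarrow> prob_dist (sections Os C) (e C)"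
  using model unfolding empirical_model_def by auto

lemma er: "event_rep X Os Y Eb" using wps unfolding wps_rep_def by auto

lemma WC: "U \<in> contexts M \<Longrightarrow> U \<noteq> {} \<Longrightarrow> fa_prob Y (SigU Os Y Eb U) \<mu>"
  using wps unfolding wps_rep_def by auto

lemma EC: "C \<in> M \<Longrightarrow> U \<subseteq> C \<Longrightarrow> U \<noteq> {} \<Longrightarrow> s \<in> sections Os U \<Longrightarrow> \<mu> (Eb s) = marg Os C (e C) U s"
  using wps unfolding wps_rep_def by auto

lemma ME: "U \<in> contexts M \<Longrightarrow> s \<in> sections Os U \<Longrightarrow> s' \<in> sections Os U \<Longrightarrow> s \<noteq> s' \<Longrightarrow> \<mu> (Eb s \<inter> Eb s') = 0"
  using wps unfolding wps_rep_def by auto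

lemma Eb_sub: "U \<subseteq> X \<Longrightarrow> s \<in> sections Os U \<Longrightarrow> Eb s \<subseteq> Y"
  using er unfolding event_rep_def by auto

lemma Eb_inter: "U \<subseteq> X \<Longrightarrow> U \<noteq> {} \<Longrightarrow> s \<in> sections Os U \<Longrightarrow> Eb s = (\<Inter>x\<in>U. Eb (s |` {x}))"
  using er unfolding event_rep_def by auto

lemma Eb_inj: "inj_on Eb (sections Os U)" if "U \<subseteq> X"
proof -
  have "inj_on Eb (\<Union>U\<in>Pow X. sections Os U)" using er unfolding event_rep_def by auto
  moreover have "sections Os U \<subseteq> (\<Union>U\<in>Pow X. sections Os U)" using that by auto
  ultimately show ?thesis using inj_on_subset by blast
qed

lemma ctx_sub: "U \<in> contexts M \<Longrightarrow> U \<subseteq> X"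
  unfolding contexts_def using MX by blast

lemma ctx_single: "x \<in> X \<Longrightarrow> {x} \<in> contexts M"
  unfolding contexts_def using UM by blast

lemma ctx_M: "C \<in> M \<Longrightarrow> C \<in> contexts M"
  unfolding contexts_def by blast

lemma M_ne: "X \<noteq> {} \<Longrightarrow> C \<in> M \<Longrightarrow> C \<noteq> {}"
proof
  assume "X \<noteq> {}" "C \<in> M" "C = {}"
  then obtain x C' where "x \<in> C'" "C' \<in> M" using UM by blast
  then show False using anti[of C C'] \<open>C \<in> M\<close> \<open>C = {}\<close> by auto
qed

lemma SigU_alg: assumes "U \<subseteq> X" shows "is_alg Y (SigU Os Y Eb U)"
proof -
  have "{Eb s | s x. x \<in> U \<and> s \<in> sections Os {x}} \<subseteq> Pow Y"
  proof clarify
    fix s x y assume h: "x \<in> U" "s \<in> sections Os {x}" "y \<in> Eb s"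
    then have "{x} \<subseteq> X" using assms by auto
    then show "y \<in> Y" using Eb_sub[OF _ h(2)] h(3) by blast
  qed
  then show ?thesis unfolding SigU_def by (rule gen_alg_is_alg)
qed

lemma fam_SigU: "U \<in> contexts M \<Longrightarrow> U \<noteq> {} \<Longrightarrow> fam Y (SigU Os Y Eb U) \<mu>"
  using SigU_alg ctx_sub WC by (simp add: fam_def)

lemma SigU_Sig: "U \<in> contexts M \<Longrightarrow> U \<noteq> {} \<Longrightarrow> SigU Os Y Eb U \<subseteq> Sig M Os Y Eb"
  unfolding Sig_def by blast

lemma gen_SigU: "x \<in> U \<Longrightarrow> r \<in> sections Os {x} \<Longrightarrow> Eb r \<in> SigU Os Y Eb U"
  unfolding SigU_def by (rule gen_alg.gen) blast

lemma Eb_SigU: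
  assumes "U \<subseteq> X" "U \<noteq> {}" "t \<in> sections Os U"
  shows "Eb t \<in> SigU Os Y Eb U"
proof -
  have "Eb t = \<Inter>((\<lambda>x. Eb (t |` {x})) ` U)" using Eb_inter assms by simp
  moreover have "\<Inter>((\<lambda>x. Eb (t |` {x})) ` U) \<in> SigU Os Y Eb U"
  proof (rule alg_Inter[OF SigU_alg[OF assms(1)]])
    show "finite ((\<lambda>x. Eb (t |` {x})) ` U)" using finX assms(1) finite_subset by blast
    show "(\<lambda>x. Eb (t |` {x})) ` U \<noteq> {}" using assms(2) by simp
    show "(\<lambda>x. Eb (t |` {x})) ` U \<subseteq> SigU Os Y Eb U"
    proof clarify
      fix x assume "x \<in> U"
      then have "t |` {x} \<in> sections Os {x}" using restr_sec[OF assms(3)] by simp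
      then show "Eb (t |` {x}) \<in> SigU Os Y Eb U" using gen_SigU \<open>x \<in> U\<close> by simp
    qed
  qed
  ultimately show ?thesis by simp
qed

end


context sc begin

definition "Zx x = Y - \<Union>(Eb ` sections Os {x})"
definition "Ov = (\<Union>x\<in>X. (\<lambda>p. Eb (fst p) \<inter> Eb (snd p)) ` {p \<in> sections Os {x} \<times> sections Os {x}. fst p \<noteq> snd p})"
definition "Zall = Zx ` X \<union> Ov"

lemma in_M: "x \<in> X \<Longrightarrow> \<exists>C\<in>M. x \<in> C" using UM by blast

lemma Zx_null: assumes x: "x \<in> X" shows "Zx x \<in> SigU Os Y Eb {x} \<and> \<mu> (Zx x) = 0"
proof -
  have cx: "{x} \<in> contexts M" using ctx_single x .
  interpret F: fam Y "SigU Os Y Eb {x}" \<mu> using fam_SigU[OF cx] by simp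
  have al: "is_alg Y (SigU Os Y Eb {x})" using SigU_alg x by simp
  let ?S = "sections Os {x}"
  have finS: "finite ?S" using fin_sec[OF finOs, of "{x}"] by simp
  have sub: "Eb ` ?S \<subseteq> SigU Os Y Eb {x}" using gen_SigU by blast
  have W: "\<Union>(Eb ` ?S) \<in> SigU Os Y Eb {x}" using alg_Union[OF al _ sub] finS by simp
  have "\<mu> (\<Union>(Eb ` ?S)) = (\<Sum>a\<in>Eb ` ?S. \<mu> a)"
  proof (rule F.null_overlap)
    show "finite (Eb ` ?S)" using finS by simp
    show "Eb ` ?S \<subseteq> SigU Os Y Eb {x}" using sub .
    show "\<forall>a\<in>Eb ` ?S. \<forall>b\<in>Eb ` ?S. a \<noteq> b \<longrightarrow> \<mu> (a \<inter> b) = 0"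
      using ME[OF cx] by blast
  qed
  also have "\<dots> = (\<Sum>r\<in>?S. \<mu> (Eb r))"
    using sum.reindex[OF Eb_inj[of "{x}"]] x by simp
  also have "\<dots> = 1"
  proof -
    obtain C where C: "C \<in> M" "x \<in> C" using in_M x by blast
    have "(\<Sum>r\<in>?S. \<mu> (Eb r)) = (\<Sum>r\<in>?S. marg Os C (e C) {x} r)"
    proof (rule sum.cong)
      fix r assume "r \<in> ?S" then show "\<mu> (Eb r) = marg Os C (e C) {x} r" using EC[OF C(1), of "{x}" r] C(2) by simp
    qed simp
    also have "\<dots> = (\<Sum>q\<in>sections Os C. e C q)"
      using sum_marg[OF finOs] C MX finX finite_subset by (metis empty_subsetI insert_subset)
    also have "\<dots> = 1" using pd[OF C(1)] unfolding prob_dist_def by simp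
    finally show ?thesis .
  qed
  finally have "\<mu> (\<Union>(Eb ` ?S)) = 1" .
  then show ?thesis unfolding Zx_def using F.compl[OF W] al W unfolding is_alg_def by simp
qed

lemma Ov_null: assumes "A \<in> Ov" shows "\<exists>x\<in>X. A \<in> SigU Os Y Eb {x} \<and> \<mu> A = 0"
proof -
  obtain x r r' where h: "x \<in> X" "r \<in> sections Os {x}" "r' \<in> sections Os {x}" "r \<noteq> r'"
    "A = Eb r \<inter> Eb r'" using assms unfolding Ov_def by auto
  have "A \<in> SigU Os Y Eb {x}" using h alg_inter[OF SigU_alg gen_SigU gen_SigU, of "{x}"] by simp
  moreover have "\<mu> A = 0" using ME[OF ctx_single] h by simp
  ultimately show ?thesis using h by blast
qed

lemma Zall_null: assumes "A \<in> Zall" shows "A \<in> Sig M Os Y Eb \<and> \<mu> A = 0 \<and> A \<subseteq> Y"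
proof -
  obtain x where x: "x \<in> X" "A \<in> SigU Os Y Eb {x}" "\<mu> A = 0"
    using assms Zx_null Ov_null unfolding Zall_def by blast
  have "A \<in> Sig M Os Y Eb" using SigU_Sig[OF ctx_single[OF x(1)]] x(2) by blast
  moreover have "A \<subseteq> Y" using SigU_alg[of "{x}"] x unfolding is_alg_def by auto
  ultimately show ?thesis using x by simp
qed

lemma Zall_fin: "finite Zall"
proof -
  have "finite Ov" unfolding Ov_def
  proof (rule finite_UN_I[OF finX])
    fix x show "finite ((\<lambda>p. Eb (fst p) \<inter> Eb (snd p)) ` {p \<in> sections Os {x} \<times> sections Os {x}. fst p \<noteq> snd p})"
      using fin_sec[OF finOs, of "{x}"] by simp
  qed
  then show ?thesis unfolding Zall_def using finX by simp
qed

lemma cover: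
  assumes "y \<in> Y" "y \<notin> \<Union>Zall"
  shows "\<exists>s\<in>sections Os X. \<forall>x\<in>X. y \<in> Eb (s |` {x})"
proof -
  have "\<forall>x\<in>X. \<exists>r. r \<in> sections Os {x} \<and> y \<in> Eb r"
  proof
    fix x assume "x \<in> X"
    then have "y \<notin> Zx x" using assms(2) unfolding Zall_def by blast
    then show "\<exists>r. r \<in> sections Os {x} \<and> y \<in> Eb r" using assms(1) unfolding Zx_def by blast
  qed
  then obtain R where R: "\<And>x. x \<in> X \<Longrightarrow> R x \<in> sections Os {x} \<and> y \<in> Eb (R x)" by metis
  define s where "s = (\<lambda>z. if z \<in> X then R z z else None)"
  have res: "s |` {x} = R x" if "x \<in> X" for x
  proof (rule ext)
    fix z show "(s |` {x}) z = R x z"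
    proof (cases "z = x")
      case True then show ?thesis using that s_def by simp
    next
      case False
      then have "z \<notin> dom (R x)" using R[OF that] unfolding sections_def by auto
      then show ?thesis using False by (simp add: domIff)
    qed
  qed
  have d: "dom s = X"
  proof
    show "dom s \<subseteq> X" unfolding s_def dom_def by (auto split: if_splits)
    show "X \<subseteq> dom s"
    proof
      fix z assume z: "z \<in> X"
      then have "z \<in> dom (R z)" using R[OF z] unfolding sections_def by auto
      then show "z \<in> dom s" using z unfolding s_def by auto
    qed
  qed
  have r: "ran s \<subseteq> Os"
  proof
    fix v assume "v \<in> ran s"
    then obtain z where "s z = Some v" unfolding ran_def by auto
    then have z: "z \<in> X" "R z z = Some v" unfolding s_def by (auto split: if_splits)
    then have "v \<in> ran (R z)" unfolding ran_def by auto
    then show "v \<in> Os" using R[OF z(1)] unfolding sections_def by auto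
  qed
  have "s \<in> sections Os X" using d r unfolding sections_def by simp
  moreover have "\<forall>x\<in>X. y \<in> Eb (s |` {x})" using R res by simp
  ultimately show ?thesis by blast
qed

lemma uniq:
  assumes "y \<notin> \<Union>Zall" "x \<in> X" "r \<in> sections Os {x}" "r' \<in> sections Os {x}" "y \<in> Eb r" "y \<in> Eb r'"
  shows "r = r'"
proof (rule ccontr)
  assume "r \<noteq> r'"
  then have "Eb r \<inter> Eb r' \<in> Ov" unfolding Ov_def using assms(2-4) by force
  then show False using assms(1,5,6) unfolding Zall_def by blast
qed

lemma cover2:
  assumes "y \<in> Y" "y \<notin> \<Union>Zall"
  shows "\<exists>s\<in>sections Os X. (\<forall>U. U \<subseteq> X \<longrightarrow> U \<noteq> {} \<longrightarrow> y \<in> Eb (s |` U)) \<and>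
     (\<forall>U t. U \<subseteq> X \<longrightarrow> U \<noteq> {} \<longrightarrow> t \<in> sections Os U \<longrightarrow> y \<in> Eb t \<longrightarrow> t = s |` U)"
proof -
  obtain s where s: "s \<in> sections Os X" "\<forall>x\<in>X. y \<in> Eb (s |` {x})" using cover[OF assms] by blast
  have A: "y \<in> Eb (s |` U)" if "U \<subseteq> X" "U \<noteq> {}" for U
  proof -
    have "s |` U \<in> sections Os U" using restr_sec[OF s(1) that(1)] .
    then have "Eb (s |` U) = (\<Inter>x\<in>U. Eb ((s |` U) |` {x}))" using Eb_inter that by simp
    moreover have "\<forall>x\<in>U. y \<in> Eb ((s |` U) |` {x})" using s(2) that(1) restr_restr by (metis subsetD)
    ultimately show ?thesis by auto
  qed
  have B: "t = s |` U" if "U \<subseteq> X" "U \<noteq> {}" "t \<in> sections Os U" "y \<in> Eb t" for U t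
  proof (rule sec_eq[OF that(3) restr_sec[OF s(1) that(1)]], rule ballI)
    fix x assume x: "x \<in> U"
    have "y \<in> Eb (t |` {x})" using Eb_inter[OF that(1-3)] that(4) x by auto
    moreover have "t |` {x} \<in> sections Os {x}" using restr_sec[OF that(3)] x by simp
    moreover have "s |` {x} \<in> sections Os {x}" using restr_sec[OF s(1)] x that(1) by auto
    ultimately have "t |` {x} = s |` {x}" using uniq[OF assms(2)] x that(1) s(2) by blast
    then show "t |` {x} = (s |` U) |` {x}" using restr_restr x by metis
  qed
  show ?thesis using s(1) A B by blast
qed

end


context sc begin

definition "Cs s = (SOME C. C \<in> M \<and> \<not> e C (s |` C) > 0)"
definition "Bad = (\<lambda>s. Eb (s |` Cs s)) ` {s \<in> sections Os X. \<not> consistent_support M e s}"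

lemma Cs: "\<not> consistent_support M e s \<Longrightarrow> Cs s \<in> M \<and> \<not> e (Cs s) (s |` Cs s) > 0"
  unfolding Cs_def consistent_support_def by (rule someI_ex) blast

lemma Bad_null: assumes "X \<noteq> {}" "A \<in> Bad" shows "A \<in> Sig M Os Y Eb \<and> \<mu> A = 0 \<and> A \<subseteq> Y"
proof -
  obtain s where s: "s \<in> sections Os X" "\<not> consistent_support M e s" "A = Eb (s |` Cs s)"
    using assms(2) unfolding Bad_def by blast
  let ?C = "Cs s"
  have C: "?C \<in> M" "\<not> e ?C (s |` ?C) > 0" using Cs[OF s(2)] by auto
  have ne: "?C \<noteq> {}" using M_ne[OF assms(1) C(1)] .
  have sub: "?C \<subseteq> X" using MX C(1) .
  have t: "s |` ?C \<in> sections Os ?C" using restr_sec[OF s(1) sub] .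
  have "A \<in> SigU Os Y Eb ?C" using Eb_SigU[OF sub ne t] s(3) by simp
  then have "A \<in> Sig M Os Y Eb" using SigU_Sig[OF ctx_M[OF C(1)] ne] by blast
  moreover have "A \<subseteq> Y" using Eb_sub[OF sub t] s(3) by simp
  moreover have "\<mu> A = e ?C (s |` ?C)" using EC[OF C(1) order_refl ne t] marg_self[OF t] s(3) by simp
  moreover have "e ?C (s |` ?C) \<ge> 0" using pd[OF C(1)] t unfolding prob_dist_def by blast
  ultimately show ?thesis using C(2) by simp
qed

lemma Bad_fin: "finite Bad"
  unfolding Bad_def using fin_sec[OF finOs finX] by simp

lemma cover3:
  assumes "X \<noteq> {}" "y \<in> Y" "y \<notin> \<Union>(Zall \<union> Bad)"
  shows "\<exists>s\<in>sections Os X. consistent_support M e s \<and>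
     (\<forall>U t. U \<subseteq> X \<longrightarrow> U \<noteq> {} \<longrightarrow> t \<in> sections Os U \<longrightarrow> y \<in> Eb t \<longrightarrow> t = s |` U)"
proof -
  have y: "y \<notin> \<Union>Zall" using assms(3) by blast
  obtain s where s: "s \<in> sections Os X" "\<forall>U. U \<subseteq> X \<longrightarrow> U \<noteq> {} \<longrightarrow> y \<in> Eb (s |` U)"
     "\<forall>U t. U \<subseteq> X \<longrightarrow> U \<noteq> {} \<longrightarrow> t \<in> sections Os U \<longrightarrow> y \<in> Eb t \<longrightarrow> t = s |` U"
    using cover2[OF assms(2) y] by blast
  have "consistent_support M e s"
  proof (rule ccontr)
    assume nc: "\<not> consistent_support M e s"
    then have C: "Cs s \<in> M" using Cs by blast
    then have "Cs s \<subseteq> X" "Cs s \<noteq> {}" using MX M_ne[OF assms(1)] by auto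
    then have "y \<in> Eb (s |` Cs s)" using s(2) by simp
    moreover have "Eb (s |` Cs s) \<in> Bad" unfolding Bad_def using s(1) nc by blast
    ultimately show False using assms(3) by blast
  qed
  then show ?thesis using s by blast
qed

lemma empty_case: assumes "X = {}" shows "Map.empty \<in> sections Os X" "consistent_support M e Map.empty"
proof -
  show "Map.empty \<in> sections Os X" using assms by (simp add: sec_empty)
  show "consistent_support M e Map.empty" unfolding consistent_support_def
  proof
    fix C assume C: "C \<in> M"
    then have "C = {}" using MX assms by blast
    then have "e C Map.empty = 1" using pd[OF C] unfolding prob_dist_def by (simp add: sec_empty)
    then show "e C (Map.empty |` C) > 0" by simp
  qed
qed

lemma Y_Sig: assumes "X \<noteq> {}" shows "Y \<in> Sig M Os Y Eb" "\<mu> Y = 1"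
proof -
  obtain x where "x \<in> X" using assms by blast
  then obtain C where C: "C \<in> M" "x \<in> C" using in_M by blast
  have ne: "C \<noteq> {}" using C by blast
  have "Y \<in> SigU Os Y Eb C" unfolding SigU_def by (rule gen_alg.top)
  then show "Y \<in> Sig M Os Y Eb" using SigU_Sig[OF ctx_M[OF C(1)] ne] by blast
  show "\<mu> Y = 1" using WC[OF ctx_M[OF C(1)] ne] unfolding fa_prob_def by simp
qed

lemma null_props: "X \<noteq> {} \<Longrightarrow> A \<in> Zall \<union> Bad \<Longrightarrow> A \<in> Sig M Os Y Eb \<and> \<mu> A = 0 \<and> A \<subseteq> Y"
  using Zall_null Bad_null by blast

lemma nullV: assumes "X \<noteq> {}" shows "Zall \<union> Bad \<subseteq> Sig M Os Y Eb" "\<Union>(Zall \<union> Bad) \<subseteq> Y"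
  "(\<Sum>A\<in>Zall \<union> Bad. \<mu> A) = 0" "finite (Zall \<union> Bad)"
proof -
  show "Zall \<union> Bad \<subseteq> Sig M Os Y Eb" using null_props[OF assms] by blast
  show "\<Union>(Zall \<union> Bad) \<subseteq> Y" using null_props[OF assms] by blast
  show "(\<Sum>A\<in>Zall \<union> Bad. \<mu> A) = 0"
    by (rule sum.neutral) (use null_props[OF assms] in blast)
  show "finite (Zall \<union> Bad)" using Zall_fin Bad_fin by simp
qed

lemma Xne1: "strongly_contextual X M Os e \<Longrightarrow> X \<noteq> {}"
proof
  assume "strongly_contextual X M Os e" "X = {}"
  then show False using empty_case[of] unfolding strongly_contextual_def by blast
qed

lemma part1:
  assumes "strongly_contextual X M Os e"
  shows "\<exists>V. finite V \<and> V \<subseteq> Sig M Os Y Eb \<and> \<Union>V \<in> Sig M Os Y Eb \<and> defect \<mu> V = 1"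
proof -
  have X: "X \<noteq> {}" using Xne1 assms .
  let ?V = "Zall \<union> Bad"
  have U: "\<Union>?V = Y"
  proof
    show "\<Union>?V \<subseteq> Y" using nullV(2)[OF X] .
    show "Y \<subseteq> \<Union>?V"
    proof
      fix y assume y: "y \<in> Y"
      show "y \<in> \<Union>?V"
      proof (rule ccontr)
        assume "y \<notin> \<Union>?V"
        then obtain s where "s \<in> sections Os X" "consistent_support M e s" using cover3[OF X y] by blast
        then show False using assms unfolding strongly_contextual_def by blast
      qed
    qed
  qed
  have "defect \<mu> ?V = 1" unfolding defect_def U using Y_Sig(2)[OF X] nullV(3)[OF X] by simp
  moreover have "\<Union>?V \<in> Sig M Os Y Eb" using U Y_Sig(1)[OF X] by simp
  ultimately show ?thesis using nullV(1,4)[OF X] by blast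
qed

lemma part2:
  assumes "logically_contextual X M Os e"
  shows "\<exists>V. finite V \<and> V \<subseteq> Sig M Os Y Eb \<and> \<Union>V \<in> Sig M Os Y Eb \<and> defect \<mu> V > 0"
proof -
  obtain C t where Ct: "C \<in> M" "t \<in> sections Os C" "e C t > 0"
    "\<not> (\<exists>s\<in>sections Os X. s |` C = t \<and> consistent_support M e s)"
    using assms unfolding logically_contextual_def by blast
  have X: "X \<noteq> {}"
  proof
    assume X0: "X = {}"
    then have "C = {}" using MX Ct(1) by blast
    then have "t = Map.empty" using Ct(2) by (simp add: sec_empty)
    then show False using Ct(4) empty_case[OF X0] \<open>C = {}\<close> by simp
  qed
  have ne: "C \<noteq> {}" using M_ne[OF X Ct(1)] .
  have sub: "C \<subseteq> X" using MX Ct(1) .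
  interpret F: fam Y "SigU Os Y Eb C" \<mu> using fam_SigU[OF ctx_M[OF Ct(1)] ne] .
  have Et: "Eb t \<in> SigU Os Y Eb C" using Eb_SigU[OF sub ne Ct(2)] .
  define D where "D = Y - Eb t"
  have D: "D \<in> SigU Os Y Eb C" unfolding D_def using Et SigU_alg[OF sub] unfolding is_alg_def by blast
  have muEt: "\<mu> (Eb t) = e C t" using EC[OF Ct(1) order_refl ne Ct(2)] marg_self[OF Ct(2)] by simp
  have muD: "\<mu> D = 1 - e C t" unfolding D_def using F.compl[OF Et] muEt by simp
  let ?W = "Zall \<union> Bad"
  let ?V = "insert D ?W"
  have U: "\<Union>?V = Y"
  proof
    show "\<Union>?V \<subseteq> Y" using nullV(2)[OF X] D_def by auto
    show "Y \<subseteq> \<Union>?V"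
    proof
      fix y assume y: "y \<in> Y"
      show "y \<in> \<Union>?V"
      proof (rule ccontr)
        assume "y \<notin> \<Union>?V"
        then have n: "y \<notin> \<Union>?W" "y \<in> Eb t" using y D_def by auto
        obtain s where s: "s \<in> sections Os X" "consistent_support M e s"
          "\<forall>U t. U \<subseteq> X \<longrightarrow> U \<noteq> {} \<longrightarrow> t \<in> sections Os U \<longrightarrow> y \<in> Eb t \<longrightarrow> t = s |` U"
          using cover3[OF X y n(1)] by blast
        have "t = s |` C" using s(3) sub ne Ct(2) n(2) by simp
        then show False using Ct(4) s(1,2) by blast
      qed
    qed
  qed
  have W0: "(\<Sum>A\<in>?W. \<mu> A) = 0" using nullV(3)[OF X] .
  have finW: "finite ?W" using Zall_fin Bad_fin by simp
  have "defect \<mu> ?V > 0"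
  proof (cases "D \<in> ?W")
    case True
    then have "?V = ?W" by blast
    then show ?thesis unfolding defect_def using U W0 Y_Sig[OF X] by simp
  next
    case False
    then have "(\<Sum>A\<in>?V. \<mu> A) = \<mu> D" using W0 finW by simp
    then show ?thesis unfolding defect_def using U muD Y_Sig[OF X] Ct(3) by simp
  qed
  moreover have "?V \<subseteq> Sig M Os Y Eb" using nullV(1)[OF X] D SigU_Sig[OF ctx_M[OF Ct(1)] ne] by blast
  moreover have "finite ?V" using finW by simp
  moreover have "\<Union>?V \<in> Sig M Os Y Eb" using U Y_Sig(1)[OF X] by simp
  ultimately show ?thesis by blast
qed

end


context sc begin

lemma Sig_Pow: "Sig M Os Y Eb \<subseteq> Pow Y"
proof
  fix A assume "A \<in> Sig M Os Y Eb"
  then obtain U where U: "U \<in> contexts M" "A \<in> SigU Os Y Eb U" unfolding Sig_def by blast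
  have "is_alg Y (SigU Os Y Eb U)" using SigU_alg ctx_sub[OF U(1)] .
  then show "A \<in> Pow Y" using U(2) unfolding is_alg_def by blast
qed

lemma empty_Sig: assumes "X \<noteq> {}" shows "{} \<in> Sig M Os Y Eb" "\<mu> {} = 0"
proof -
  obtain x where "x \<in> X" using assms by blast
  then obtain C where C: "C \<in> M" "x \<in> C" using in_M by blast
  have ne: "C \<noteq> {}" using C by blast
  interpret F: fam Y "SigU Os Y Eb C" \<mu> using fam_SigU[OF ctx_M[OF C(1)] ne] .
  have "{} \<in> SigU Os Y Eb C" using alg_empty[OF SigU_alg[OF MX[OF C(1)]]] .
  then show "{} \<in> Sig M Os Y Eb" using SigU_Sig[OF ctx_M[OF C(1)] ne] by blast
  show "\<mu> {} = 0" using F.m_empty .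
qed

lemma part3_main:
  assumes X: "X \<noteq> {}" and me: "monotonic_extension Y (Sig M Os Y Eb) \<mu> \<Sigma>' \<mu>'"
    and H: "\<forall>V. finite V \<longrightarrow> V \<subseteq> \<Sigma>' \<longrightarrow> (\<forall>A\<in>V. \<forall>B\<in>V. A \<noteq> B \<longrightarrow> A \<inter> B = {}) \<longrightarrow> \<Union>V \<in> \<Sigma>' \<longrightarrow>
                    \<mu>' (\<Union>V) = (\<Sum>A\<in>V. \<mu>' A)"
  shows "\<not> probabilistically_contextual X M Os e"
proof -
  let ?S = "Sig M Os Y Eb"
  let ?G = "gen_alg Y ?S"
  have alG: "is_alg Y ?G" using gen_alg_is_alg[OF Sig_Pow] .
  have SG: "?S \<subseteq> ?G" by (rule subsetI) (rule gen_alg.gen)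
  have me': "\<Sigma>' \<subseteq> Pow Y \<and> ?G \<subseteq> \<Sigma>' \<and> (\<forall>A\<in>?S. \<mu>' A = \<mu> A) \<and> (\<forall>A\<in>\<Sigma>'. 0 \<le> \<mu>' A \<and> \<mu>' A \<le> 1) \<and>
     (\<forall>A\<in>\<Sigma>'. \<forall>B\<in>\<Sigma>'. A \<subseteq> B \<longrightarrow> \<mu>' A \<le> \<mu>' B)"
    using me unfolding monotonic_extension_def .
  have GS': "?G \<subseteq> \<Sigma>'" using me' by (elim conjE)
  have agree: "\<And>A. A \<in> ?S \<Longrightarrow> \<mu>' A = \<mu> A" using me' by (elim conjE) simp
  have bnd: "\<And>A. A \<in> \<Sigma>' \<Longrightarrow> 0 \<le> \<mu>' A" using me' by (elim conjE) simp
  have e0: "\<mu>' {} = 0" using agree empty_Sig[OF X] by simp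
  have "fa_prob Y ?G \<mu>'"
    unfolding fa_prob_def
  proof (intro conjI ballI impI)
    show "\<mu>' Y = 1" using agree Y_Sig[OF X] by simp
  next
    fix a assume "a \<in> ?G" then show "0 \<le> \<mu>' a" using bnd GS' by blast
  next
    fix a b assume ab: "a \<in> ?G" "b \<in> ?G" "a \<inter> b = {}"
    show "\<mu>' (a \<union> b) = \<mu>' a + \<mu>' b"
    proof (cases "a = b")
      case True then have "a = {}" using ab by simp
      then show ?thesis using True e0 by simp
    next
      case False
      have "a \<union> b \<in> ?G" using alG ab unfolding is_alg_def by blast
      then have u: "\<Union>{a, b} \<in> \<Sigma>'" using GS' by auto
      have f: "finite {a, b}" by simp
      have sb: "{a, b} \<subseteq> \<Sigma>'" using ab(1,2) GS' by auto
      have dj: "\<forall>A\<in>{a, b}. \<forall>B\<in>{a, b}. A \<noteq> B \<longrightarrow> A \<inter> B = {}" using ab(3) by auto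
      have "\<mu>' (\<Union>{a, b}) = (\<Sum>A\<in>{a, b}. \<mu>' A)"
        using H f sb dj u by blast
      then show ?thesis using False by simp
    qed
  qed
  then interpret F: fam Y ?G \<mu>' using alG by (simp add: fam_def)
  let ?N = "\<Union>Zall"
  have ZG: "Zall \<subseteq> ?G" using Zall_null SG by blast
  have NG: "?N \<in> ?G" using alg_Union[OF alG Zall_fin ZG] .
  have "\<mu>' ?N \<le> (\<Sum>A\<in>Zall. \<mu>' A)" using F.subadd[OF Zall_fin ZG] .
  also have "\<dots> = 0" by (rule sum.neutral) (use Zall_null agree in simp)
  finally have N0: "\<mu>' ?N = 0" using F.nonneg[OF NG] by simp
  have EbG: "Eb s \<in> ?G" if s: "s \<in> sections Os X" for s
  proof -
    have "Eb s = \<Inter>((\<lambda>x. Eb (s |` {x})) ` X)" using Eb_inter[OF order_refl X s] by simp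
    moreover have "\<Inter>((\<lambda>x. Eb (s |` {x})) ` X) \<in> ?G"
    proof (rule alg_Inter[OF alG])
      show "finite ((\<lambda>x. Eb (s |` {x})) ` X)" using finX by simp
      show "(\<lambda>x. Eb (s |` {x})) ` X \<noteq> {}" using X by simp
      show "(\<lambda>x. Eb (s |` {x})) ` X \<subseteq> ?G"
      proof clarify
        fix x assume x: "x \<in> X"
        have "s |` {x} \<in> sections Os {x}" using restr_sec[OF s] x by simp
        then have "Eb (s |` {x}) \<in> SigU Os Y Eb {x}" using gen_SigU by simp
        then show "Eb (s |` {x}) \<in> ?G" using SigU_Sig[OF ctx_single[OF x]] SG by blast
      qed
    qed
    ultimately show ?thesis by simp
  qed
  have Ebsub1: "Eb s \<subseteq> Eb (s |` {x})" if "s \<in> sections Os X" "x \<in> X" for s x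
    using Eb_inter[OF order_refl X that(1)] that(2) by blast
  have ov: "\<mu>' (Eb s \<inter> Eb s') = 0" if s: "s \<in> sections Os X" "s' \<in> sections Os X" "s \<noteq> s'" for s s'
  proof -
    obtain x where x: "x \<in> X" "s |` {x} \<noteq> s' |` {x}" using sec_eq[OF s(1,2)] s(3) by blast
    have r1: "s |` {x} \<in> sections Os {x}" using restr_sec[OF s(1), of "{x}"] x by simp
    have r2: "s' |` {x} \<in> sections Os {x}" using restr_sec[OF s(2), of "{x}"] x by simp
    let ?p = "(s |` {x}, s' |` {x})"
    have "?p \<in> {p \<in> sections Os {x} \<times> sections Os {x}. fst p \<noteq> snd p}" using r1 r2 x by simp
    then have "(\<lambda>p. Eb (fst p) \<inter> Eb (snd p)) ?p \<in> Ov" unfolding Ov_def using x(1) by blast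
    then have "Eb (s |` {x}) \<inter> Eb (s' |` {x}) \<in> Ov" by simp
    then have "Eb (s |` {x}) \<inter> Eb (s' |` {x}) \<subseteq> ?N" unfolding Zall_def by blast
    moreover have "Eb s \<inter> Eb s' \<subseteq> Eb (s |` {x}) \<inter> Eb (s' |` {x})" using Ebsub1 s x by blast
    ultimately have "\<mu>' (Eb s \<inter> Eb s') \<le> \<mu>' ?N"
      using F.mono[OF alg_inter[OF alG EbG[OF s(1)] EbG[OF s(2)]] NG] by blast
    then show ?thesis using N0 F.nonneg[OF alg_inter[OF alG EbG[OF s(1)] EbG[OF s(2)]]] by simp
  qed
  define eX where "eX = (\<lambda>s. \<mu>' (Eb s))"
  have marg_eq: "marg Os X eX C t = e C t" if C: "C \<in> M" and t: "t \<in> sections Os C" for C t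
  proof -
    let ?Ext = "{s \<in> sections Os X. s |` C = t}"
    have ne: "C \<noteq> {}" using M_ne[OF X C] .
    have sub: "C \<subseteq> X" using MX[OF C] .
    have finE: "finite ?Ext" using fin_sec[OF finOs finX] by simp
    have EG: "Eb ` ?Ext \<subseteq> ?G" using EbG by blast
    have UG: "\<Union>(Eb ` ?Ext) \<in> ?G" using alg_Union[OF alG _ EG] finE by simp
    have "\<mu>' (\<Union>(Eb ` ?Ext)) = (\<Sum>a\<in>Eb ` ?Ext. \<mu>' a)"
    proof (rule F.null_overlap)
      show "finite (Eb ` ?Ext)" using finE by simp
      show "Eb ` ?Ext \<subseteq> ?G" using EG .
      show "\<forall>a\<in>Eb ` ?Ext. \<forall>b\<in>Eb ` ?Ext. a \<noteq> b \<longrightarrow> \<mu>' (a \<inter> b) = 0" using ov by blast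
    qed
    also have "\<dots> = (\<Sum>s\<in>?Ext. \<mu>' (Eb s))"
    proof (rule sum.reindex[unfolded comp_def])
      show "inj_on Eb ?Ext" by (rule inj_on_subset[OF Eb_inj[OF order_refl]]) blast
    qed
    also have "\<dots> = marg Os X eX C t" unfolding marg_def eX_def by simp
    finally have m1: "\<mu>' (\<Union>(Eb ` ?Ext)) = marg Os X eX C t" .
    have EtS: "Eb t \<in> ?S" using Eb_SigU[OF sub ne t] SigU_Sig[OF ctx_M[OF C] ne] by blast
    have EtG: "Eb t \<in> ?G" using EtS SG by blast
    have m2: "\<mu>' (Eb t) = e C t"
      using agree[OF EtS] EC[OF C order_refl ne t] marg_self[OF t] by simp
    have s1: "\<Union>(Eb ` ?Ext) \<subseteq> Eb t"
    proof
      fix y assume "y \<in> \<Union>(Eb ` ?Ext)"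
      then obtain s where s: "s \<in> sections Os X" "s |` C = t" and y: "y \<in> Eb s" by blast
      have "\<forall>x\<in>C. y \<in> Eb (t |` {x})"
      proof
        fix x assume x: "x \<in> C"
        have xX: "x \<in> X" using sub x by blast
        have "(s |` C) |` {x} = s |` {x}" using restr_restr[OF x] .
        then have e1: "t |` {x} = s |` {x}" using s(2) by simp
        have "y \<in> Eb (s |` {x})" using Ebsub1[OF s(1) xX] y by blast
        then show "y \<in> Eb (t |` {x})" using e1 by simp
      qed
      then show "y \<in> Eb t" using Eb_inter[OF sub ne t] by simp
    qed
    have s2: "Eb t \<subseteq> \<Union>(Eb ` ?Ext) \<union> ?N"
    proof
      fix y assume y: "y \<in> Eb t"
      show "y \<in> \<Union>(Eb ` ?Ext) \<union> ?N"
      proof (cases "y \<in> ?N")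
        case False
        have yY: "y \<in> Y" using Eb_sub[OF sub t] y by blast
        obtain s where s: "s \<in> sections Os X" "\<forall>U. U \<subseteq> X \<longrightarrow> U \<noteq> {} \<longrightarrow> y \<in> Eb (s |` U)"
          "\<forall>U t. U \<subseteq> X \<longrightarrow> U \<noteq> {} \<longrightarrow> t \<in> sections Os U \<longrightarrow> y \<in> Eb t \<longrightarrow> t = s |` U"
          using cover2[OF yY False] by blast
        have "y \<in> Eb (s |` X)" using s(2)[rule_format, OF order_refl X] .
        then have "y \<in> Eb s" using restr_self[OF s(1)] by simp
        moreover have "t = s |` C" using s(3)[rule_format, OF sub ne t y] .
        ultimately show ?thesis using s(1) by blast
      qed simp
    qed
    have UN: "\<Union>(Eb ` ?Ext) \<union> ?N \<in> ?G" using alG UG NG unfolding is_alg_def by blast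
    have "\<mu>' (Eb t) \<le> \<mu>' (\<Union>(Eb ` ?Ext) \<union> ?N)"
      using F.mono[OF EtG UN s2] .
    also have "\<dots> = \<mu>' (\<Union>(Eb ` ?Ext)) + \<mu>' ?N - \<mu>' (\<Union>(Eb ` ?Ext) \<inter> ?N)" using F.un[OF UG NG] .
    also have "\<dots> \<le> \<mu>' (\<Union>(Eb ` ?Ext))" using N0 F.nonneg[OF alg_inter[OF alG UG NG]] by simp
    finally have "\<mu>' (Eb t) \<le> \<mu>' (\<Union>(Eb ` ?Ext))" .
    moreover have "\<mu>' (\<Union>(Eb ` ?Ext)) \<le> \<mu>' (Eb t)" using F.mono[OF UG EtG s1] .
    ultimately show ?thesis using m1 m2 by simp
  qed
  have pdX: "prob_dist (sections Os X) eX"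
    unfolding prob_dist_def
  proof
    show "\<forall>r\<in>sections Os X. 0 \<le> eX r" using F.nonneg EbG unfolding eX_def by blast
    obtain x where "x \<in> X" using X by blast
    then obtain C where C: "C \<in> M" "x \<in> C" using in_M by blast
    have "sum eX (sections Os X) = (\<Sum>t\<in>sections Os C. marg Os X eX C t)"
      using sum_marg[OF finOs finX MX[OF C(1)]] by simp
    also have "\<dots> = (\<Sum>t\<in>sections Os C. e C t)" using marg_eq C(1) by simp
    also have "\<dots> = 1" using pd[OF C(1)] unfolding prob_dist_def by simp
    finally show "sum eX (sections Os X) = 1" .
  qed
  show ?thesis unfolding probabilistically_contextual_def using pdX marg_eq by blast
qed

lemma part3_empty:
  assumes X: "X = {}" shows "\<not> probabilistically_contextual X M Os e"
proof -
  define eX where "eX = (\<lambda>s::'x \<rightharpoonup> 'o. 1::real)"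
  have pdX: "prob_dist (sections Os X) eX" unfolding prob_dist_def eX_def using X by (simp add: sec_empty)
  have "marg Os X eX C t = e C t" if C: "C \<in> M" and t: "t \<in> sections Os C" for C t
  proof -
    have C0: "C = {}" using MX[OF C] X by blast
    then have t0: "t = Map.empty" using t by (simp add: sec_empty)
    have "e C t = 1" using pd[OF C] C0 t0 unfolding prob_dist_def by (simp add: sec_empty)
    moreover have "marg Os X eX C t = 1" unfolding marg_def eX_def using X C0 t0 by (simp add: sec_empty)
    ultimately show ?thesis by simp
  qed
  then show ?thesis unfolding probabilistically_contextual_def using pdX by blast
qed

lemma part3:
  assumes "probabilistically_contextual X M Os e"
  shows "\<forall>\<Sigma>' \<mu>'. monotonic_extension Y (Sig M Os Y Eb) \<mu> \<Sigma>' \<mu>' \<longrightarrow>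
               (\<exists>V. finite V \<and> V \<subseteq> \<Sigma>' \<and> (\<forall>A\<in>V. \<forall>B\<in>V. A \<noteq> B \<longrightarrow> A \<inter> B = {}) \<and> \<Union>V \<in> \<Sigma>' \<and>
                    \<mu>' (\<Union>V) \<noteq> (\<Sum>A\<in>V. \<mu>' A))"
proof (intro allI impI)
  fix \<Sigma>' \<mu>' assume me: "monotonic_extension Y (Sig M Os Y Eb) \<mu> \<Sigma>' \<mu>'"
  have X: "X \<noteq> {}"
  proof
    assume "X = {}" then show False using part3_empty assms by simp
  qed
  show "\<exists>V. finite V \<and> V \<subseteq> \<Sigma>' \<and> (\<forall>A\<in>V. \<forall>B\<in>V. A \<noteq> B \<longrightarrow> A \<inter> B = {}) \<and> \<Union>V \<in> \<Sigma>' \<and>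
                    \<mu>' (\<Union>V) \<noteq> (\<Sum>A\<in>V. \<mu>' A)"
  proof (rule ccontr)
    assume "\<not> ?thesis"
    then have H: "\<forall>V. finite V \<longrightarrow> V \<subseteq> \<Sigma>' \<longrightarrow> (\<forall>A\<in>V. \<forall>B\<in>V. A \<noteq> B \<longrightarrow> A \<inter> B = {}) \<longrightarrow> \<Union>V \<in> \<Sigma>' \<longrightarrow>
                    \<mu>' (\<Union>V) = (\<Sum>A\<in>V. \<mu>' A)" by blast
    show False using part3_main[OF X me H] assms by simp
  qed
qed

end

theorem theorem1:
  fixes X :: "'x set" and M :: "'x set set" and Os :: "'o set"
    and e :: "'x set \<Rightarrow> ('x \<rightharpoonup> 'o) \<Rightarrow> real"
    and Y :: "'y set" and Eb :: "('x \<rightharpoonup> 'o) \<Rightarrow> 'y set" and \<mu> :: "'y set \<Rightarrow> real"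
  assumes "empirical_scenario X M Os"
    and "empirical_model X M Os e"
    and "wps_rep X M Os e Y Eb \<mu>"
  shows "(strongly_contextual X M Os e \<longrightarrow>
            (\<exists>V. finite V \<and> V \<subseteq> Sig M Os Y Eb \<and> \<Union>V \<in> Sig M Os Y Eb \<and> defect \<mu> V = 1))
       \<and> (logically_contextual X M Os e \<longrightarrow>
            (\<exists>V. finite V \<and> V \<subseteq> Sig M Os Y Eb \<and> \<Union>V \<in> Sig M Os Y Eb \<and> defect \<mu> V > 0))
       \<and> (probabilistically_contextual X M Os e \<longrightarrow>
            (\<forall>\<Sigma>' \<mu>'. monotonic_extension Y (Sig M Os Y Eb) \<mu> \<Sigma>' \<mu>' \<longrightarrow>
               (\<exists>V. finite V \<and> V \<subseteq> \<Sigma>' \<and> (\<forall>A\<in>V. \<forall>B\<in>V. A \<noteq> B \<longrightarrow> A \<inter> B = {}) \<and> \<Union>V \<in> \<Sigma>' \<and>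
                    \<mu>' (\<Union>V) \<noteq> (\<Sum>A\<in>V. \<mu>' A))))"
  proof -
  interpret L: sc X M Os e Y Eb \<mu> using assms by (simp add: sc_def)
  show ?thesis using L.part1 L.part2 L.part3 by blast
qed

end
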